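(* Let $\mathbf{S}=\mathbf{V}\boldsymbol{\Lambda}\mathbf{V}^{\mathsf{H}}$ and $\hat{\mathbf{S}}$ be $N\times N$ graph shift operators, and let $\mathbf{h}$ be an integral Lipschitz filter with integral Lipschitz constant $C$. Assume there exists a relative perturbation matrix $\mathbf{E}=\mathbf{U}\mathbf{M}\mathbf{U}^{\mathsf{H}}\in\mathcal{E}(\mathbf{S},\hat{\mathbf{S}})$ with $d(\mathbf{S},\hat{\mathbf{S}})\le\|\mathbf{E}\|\le\varepsilon$ that furthermore satisfies $$\min\left[\left\|\frac{\mathbf{E}}{\|\mathbf{E}\|}-\mathbf{I}\right\|,\ \left\|\frac{\mathbf{E}}{\|\mathbf{E}\|}+\mathbf{I}\right\|\right]\le\varepsilon.$$ Then $$\|\mathbf{H}(\mathbf{S})-\mathbf{H}(\hat{\mathbf{S}})\|_{\mathcal{P}}\le 2C\varepsilon+\mathcal{O}(\varepsilon^2).$$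
   Context: A graph shift operator is a real symmetric $N\times N$ matrix; $\mathbf{S}=\mathbf{V}\boldsymbol{\Lambda}\mathbf{V}^{\mathsf{H}}$ with $\mathbf{V}$ orthonormal eigenvectors and $\boldsymbol{\Lambda}$ diagonal; $\mathbf{E}$ is symmetric with $\mathbf{U}$ orthonormal and $\mathbf{M}$ diagonal. $\|\cdot\|$ denotes the spectral norm (Euclidean norm for vectors). $\mathcal{P}$ is the set of $N\times N$ permutation matrices. $\mathcal{E}(\mathbf{S},\hat{\mathbf{S}})=\{\mathbf{E}:\mathbf{P}^{\mathsf{T}}\hat{\mathbf{S}}\mathbf{P}=\mathbf{S}+(\mathbf{E}\mathbf{S}+\mathbf{S}\mathbf{E})\text{ for some }\mathbf{P}\in\mathcal{P}\}$, and $d(\mathbf{S},\hat{\mathbf{S}})=\min\{\|\mathbf{E}\|:\mathbf{P}\in\mathcal{P},\ \mathbf{P}^{\mathsf{T}}\hat{\mathbf{S}}\mathbf{P}=\mathbf{S}+\mathbf{E}\mathbf{S}+\mathbf{S}\mathbf{E}\}$. For linear operators, $\|\mathbf{A}-\hat{\mathbf{A}}\|_{\mathcal{P}}=\min_{\mathbf{P}\in\mathcal{P}}\max_{\|\mathbf{x}\|=1}\|\mathbf{P}^{\mathsf{T}}(\mathbf{A}\mathbf{x})-\hat{\mathbf{A}}(\mathbf{P}^{\mathsf{T}}\mathbf{x})\|$. A filter $\mathbf{h}=\{h_k\}_{k\ge0}$ defines $\mathbf{H}(\mathbf{S})=\sum_k h_k\mathbf{S}^k$ and frequency response $h(\lambda)=\sum_k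 h_k\lambda^k$ (analytic), with $|h(\lambda)|\le1$; it is integral Lipschitz with constant $C>0$ if $|h(\lambda_2)-h(\lambda_1)|\le C\,\frac{|\lambda_2-\lambda_1|}{|\lambda_1+\lambda_2|/2}$ for all $\lambda_1,\lambda_2$. $\mathcal{O}(\varepsilon^2)$ denotes a term bounded by a constant times $\varepsilon^2$. *)

theory Defs
  imports "HOL-Analysis.Analysis"
begin

definition symmetric_mat :: "real^'n^'n \<Rightarrow> bool" where
  "symmetric_mat A \<longleftrightarrow> transpose A = A"

definition snorm :: "real^'n^'n \<Rightarrow> real" where
  "snorm A = onorm (\<lambda>x. A *v x)"

primrec mpow :: "real^'n^'n \<Rightarrow> nat \<Rightarrow> real^'n^'n" where
  "mpow A 0 = mat 1"
| "mpow A (Suc k) = A ** mpow A k"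

definition graph_filter :: "(nat \<Rightarrow> real) \<Rightarrow> real^'n^'n \<Rightarrow> real^'n^'n" where
  "graph_filter h S = (\<Sum>k. h k *\<^sub>R mpow S k)"

definition freq_resp :: "(nat \<Rightarrow> real) \<Rightarrow> real \<Rightarrow> real" where
  "freq_resp h t = (\<Sum>k. h k * t ^ k)"

text \<open>Integral Lipschitz condition, written multiplied out to avoid division by zero.\<close>
definition integral_lipschitz :: "(nat \<Rightarrow> real) \<Rightarrow> real \<Rightarrow> bool" where
  "integral_lipschitz h C \<longleftrightarrow> C > 0 \<and>
     (\<forall>l1 l2. \<bar>freq_resp h l2 - freq_resp h l1\<bar> * (\<bar>l1 + l2\<bar> / 2) \<le> C * \<bar>l2 - l1\<bar>)"

definition perm_mat :: "('n \<Rightarrow> 'n) \<Rightarrow> real^'n^'n" where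
  "perm_mat p = (\<chi> i j. if p j = i then 1 else 0)"

definition perm_mats :: "(real^'n^'n) set" where
  "perm_mats = {perm_mat p | p. p permutes (UNIV :: 'n set)}"

definition rel_pert_set :: "real^'n^'n \<Rightarrow> real^'n^'n \<Rightarrow> (real^'n^'n) set" where
  "rel_pert_set S S' = {E. \<exists>P \<in> perm_mats. transpose P ** S' ** P = S + (E ** S + S ** E)}"

definition pert_dist :: "real^'n^'n \<Rightarrow> real^'n^'n \<Rightarrow> real" where
  "pert_dist S S' = Inf {snorm E | E P. P \<in> perm_mats \<and> transpose P ** S' ** P = S + E ** S + S ** E}"

definition perm_op_dist :: "real^'n^'n \<Rightarrow> real^'n^'n \<Rightarrow> real" where
  "perm_op_dist A A' = Min ((\<lambda>P. onorm (\<lambda>x. transpose P *v (A *v x) - A' *v (transpose P *v x))) ` perm_mats)"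

end

theory Submission
  imports Defs
begin


lemma sym_inner:
  assumes "symmetric_mat A"
  shows "x \<bullet> (A *v y) = (A *v x) \<bullet> y"
proof -
  have "(A *v x) \<bullet> y = (x v* transpose A) \<bullet> y" by (simp add: vector_transpose_matrix)
  also have "\<dots> = x \<bullet> (transpose A *v y)" by (rule dot_lmul_matrix)
  finally have c: "(A *v x) \<bullet> y = x \<bullet> (transpose A *v y)" .
  have "transpose A = A" using assms by (simp add: symmetric_mat_def)
  then show ?thesis using c by metis
qed

lemma quad_nonpos_zero:
  fixes a b :: real
  assumes "a \<ge> 0" and "\<And>t. t > 0 \<Longrightarrow> 2 * t * a + t^2 * b \<le> 0"
  shows "a = 0"
proof (rule ccontr)
  assume "a \<noteq> 0" hence ap: "a > 0" using assms(1) by simp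
  define t where "t = a / (\<bar>b\<bar> + 1)"
  have tp: "t > 0" using ap by (simp add: t_def)
  have "2 * t * a + t^2 * b \<le> 0" using assms(2) tp by simp
  hence "t * (2 * a + t * b) \<le> 0" by (simp add: algebra_simps power2_eq_square)
  hence "2 * a + t * b \<le> 0" using tp by (simp add: mult_le_0_iff)
  moreover have "t * \<bar>b\<bar> < a" unfolding t_def using ap
    by (simp add: field_simps)
  moreover have "- (t * b) \<le> t * \<bar>b\<bar>" using tp
    by (metis abs_ge_minus_self mult_left_mono less_imp_le mult_minus_right)
  ultimately show False using ap by linarith
qed

lemma eigvec_exists:
  assumes sym: "symmetric_mat A" and W: "subspace W" and inv: "\<And>x. x \<in> W \<Longrightarrow> A *v x \<in> W"
    and ne: "x0 \<in> W" "x0 \<noteq> 0"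
  shows "\<exists>v\<in>W. norm v = 1 \<and> A *v v = (v \<bullet> (A *v v)) *\<^sub>R v"
proof -
  define K where "K = W \<inter> sphere 0 1"
  have cK: "compact K" unfolding K_def
    by (metis W closed_subspace compact_Int_closed compact_sphere inf_commute)
  have "x0 /\<^sub>R norm x0 \<in> K" using ne W unfolding K_def
    by (simp add: subspace_scale)
  hence neK: "K \<noteq> {}" by auto
  have cq: "continuous_on K (\<lambda>x. x \<bullet> (A *v x))"
    by (intro continuous_on_inner continuous_on_id linear_continuous_on matrix_vector_mul_bounded_linear)
  obtain v where vK: "v \<in> K" and vmax: "\<And>y. y \<in> K \<Longrightarrow> y \<bullet> (A *v y) \<le> v \<bullet> (A *v v)"
    using continuous_attains_sup[OF cK neK cq] by blast
  define l where "l = v \<bullet> (A *v v)"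
  have vW: "v \<in> W" and nv: "norm v = 1" using vK by (auto simp: K_def)
  have vv: "v \<bullet> v = 1" using nv by (simp add: dot_square_norm)
  have bound: "y \<bullet> (A *v y) \<le> l * (y \<bullet> y)" if yW: "y \<in> W" for y
  proof (cases "y = 0")
    case True then show ?thesis by simp
  next
    case False
    define u where "u = y /\<^sub>R norm y"
    have "u \<in> K" using yW False W unfolding K_def u_def by (simp add: subspace_scale)
    hence "u \<bullet> (A *v u) \<le> l" using vmax l_def by blast
    moreover have "u \<bullet> (A *v u) = (y \<bullet> (A *v y)) / (norm y)^2"
      unfolding u_def using False by (simp add: matrix_vector_mult_scaleR power2_eq_square field_simps)
    ultimately have "y \<bullet> (A *v y) / (norm y)^2 \<le> l" by simp
    hence "y \<bullet> (A *v y) \<le> l * (norm y)^2" using False by (simp add: divide_le_eq)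
    then show ?thesis by (simp add: dot_square_norm)
  qed
  define w where "w = A *v v - l *\<^sub>R v"
  have wW: "w \<in> W" unfolding w_def using vW inv W by (simp add: subspace_diff subspace_scale)
  have key: "2 * t * (w \<bullet> w) + t^2 * (w \<bullet> (A *v w) - l * (w \<bullet> w)) \<le> 0" for t :: real
  proof -
    have yW: "v + t *\<^sub>R w \<in> W" using vW wW W by (simp add: subspace_add subspace_scale)
    have Av: "A *v (v + t *\<^sub>R w) = A *v v + t *\<^sub>R (A *v w)"
      by (simp add: matrix_vector_right_distrib matrix_vector_mult_scaleR)
    have s1: "v \<bullet> (A *v w) = w \<bullet> (A *v v)" using sym_inner[OF sym, of v w] by (simp add: inner_commute)
    have e1: "(v + t *\<^sub>R w) \<bullet> (A *v (v + t *\<^sub>R w)) = l + 2 * t * (w \<bullet> (A *v v)) + t^2 * (w \<bullet> (A *v w))"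
      unfolding Av by (simp add: inner_add_left inner_add_right s1 l_def power2_eq_square distrib_left mult.assoc)
    have e2: "(v + t *\<^sub>R w) \<bullet> (v + t *\<^sub>R w) = 1 + 2 * t * (v \<bullet> w) + t^2 * (w \<bullet> w)"
      using vv by (simp add: inner_add_left inner_add_right power2_eq_square inner_commute)
    have h: "w \<bullet> w = w \<bullet> (A *v v) - l * (v \<bullet> w)"
      by (metis inner_diff_right inner_scaleR_right w_def inner_commute)
    have aux: "2 * t * (a1 - l * pw) + t^2 * (q - l * ww) = (l + 2 * t * a1 + t^2 * q) - l * (1 + 2 * t * pw + t^2 * ww)"
      for ww a1 pw q :: real
      by (simp add: algebra_simps power2_eq_square)
    have bd: "(v + t *\<^sub>R w) \<bullet> (A *v (v + t *\<^sub>R w)) \<le> l * ((v + t *\<^sub>R w) \<bullet> (v + t *\<^sub>R w))"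
      by (rule bound[OF yW])
    have "2 * t * (w \<bullet> w) + t^2 * (w \<bullet> (A *v w) - l * (w \<bullet> w)) =
          2 * t * (w \<bullet> (A *v v) - l * (v \<bullet> w)) + t^2 * (w \<bullet> (A *v w) - l * (w \<bullet> w))"
      using h by simp
    also have "\<dots> \<le> 0" unfolding aux using bd unfolding e1 e2 by linarith
    finally show ?thesis .
  qed
  have "w \<bullet> w = 0"
    by (rule quad_nonpos_zero[of "w \<bullet> w" "w \<bullet> (A *v w) - l * (w \<bullet> w)"]) (use key in auto)
  hence "w = 0" by simp
  then show ?thesis using vW nv unfolding w_def l_def by auto
qed



lemma spectral_set:
  fixes A :: "real^'n^'n"
  assumes sym: "symmetric_mat A"
  shows "\<exists>B. finite B \<and> card B = CARD('n) \<and> (\<forall>b\<in>B. norm b = 1 \<and> A *v b = (b \<bullet> (A *v b)) *\<^sub>R b)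
           \<and> (\<forall>b\<in>B. \<forall>c\<in>B. b \<noteq> c \<longrightarrow> b \<bullet> c = 0)"
proof -
  have "\<forall>k. k \<le> CARD('n) \<longrightarrow> (\<exists>B::(real^'n) set. finite B \<and> card B = k \<and> (\<forall>b\<in>B. norm b = 1 \<and> A *v b = (b \<bullet> (A *v b)) *\<^sub>R b)
           \<and> (\<forall>b\<in>B. \<forall>c\<in>B. b \<noteq> c \<longrightarrow> b \<bullet> c = 0))"
  proof (intro allI)
    fix k show "k \<le> CARD('n) \<longrightarrow> (\<exists>B::(real^'n) set. finite B \<and> card B = k \<and> (\<forall>b\<in>B. norm b = 1 \<and> A *v b = (b \<bullet> (A *v b)) *\<^sub>R b)
           \<and> (\<forall>b\<in>B. \<forall>c\<in>B. b \<noteq> c \<longrightarrow> b \<bullet> c = 0))"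
    proof (induction k)
      case 0
      show ?case by (intro impI exI[of _ "{}"]) simp
    next
      case (Suc k)
      show ?case
      proof
        assume le: "Suc k \<le> CARD('n)"
        then obtain B :: "(real^'n) set" where fB: "finite B" and cB: "card B = k"
          and eB: "\<forall>b\<in>B. norm b = 1 \<and> A *v b = (b \<bullet> (A *v b)) *\<^sub>R b"
          and oB: "\<forall>b\<in>B. \<forall>c\<in>B. b \<noteq> c \<longrightarrow> b \<bullet> c = 0"
          using Suc.IH by auto
        have "span B \<noteq> UNIV"
        proof
          assume "span B = UNIV"
          hence "dim (UNIV :: (real^'n) set) \<le> card B"
            using span_card_ge_dim[of B UNIV] fB by auto
          moreover have "dim (UNIV :: (real^'n) set) = CARD('n)" by (simp add: dim_UNIV)
          ultimately show False using cB le by simp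
        qed
        then obtain a :: "real^'n" where a0: "a \<noteq> 0" and aspan: "span B \<subseteq> {x. a \<bullet> x = 0}"
          using span_not_univ_subset_hyperplane by blast
        define W where "W = {x :: real^'n. \<forall>b\<in>B. b \<bullet> x = 0}"
        have sW: "subspace W" unfolding W_def subspace_def
          by (simp add: inner_add_right inner_scaleR_right)
        have aW: "a \<in> W" unfolding W_def using aspan span_superset by (fastforce simp: inner_commute)
        have iW: "A *v x \<in> W" if "x \<in> W" for x
        proof -
          have "b \<bullet> (A *v x) = 0" if bB: "b \<in> B" for b
          proof -
            have "b \<bullet> (A *v x) = (A *v b) \<bullet> x" by (rule sym_inner[OF sym])
            also have "\<dots> = (b \<bullet> (A *v b)) * (b \<bullet> x)" using eB bB by (metis inner_scaleR_left)
            also have "\<dots> = 0" using \<open>x \<in> W\<close> bB unfolding W_def by simp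
            finally show ?thesis .
          qed
          then show ?thesis unfolding W_def by blast
        qed
        obtain v where vW: "v \<in> W" and nv: "norm v = 1" and ev: "A *v v = (v \<bullet> (A *v v)) *\<^sub>R v"
          using eigvec_exists[OF sym sW iW aW a0] by blast
        have vv: "v \<bullet> v = 1" using nv by (simp add: dot_square_norm)
        have vB: "v \<notin> B" using vW vv unfolding W_def by auto
        show "\<exists>B::(real^'n) set. finite B \<and> card B = Suc k \<and> (\<forall>b\<in>B. norm b = 1 \<and> A *v b = (b \<bullet> (A *v b)) *\<^sub>R b)
           \<and> (\<forall>b\<in>B. \<forall>c\<in>B. b \<noteq> c \<longrightarrow> b \<bullet> c = 0)"
        proof (intro exI[of _ "insert v B"] conjI)
          show "finite (insert v B)" using fB by simp
          show "card (insert v B) = Suc k" using fB vB cB by simp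
          show "\<forall>b\<in>insert v B. norm b = 1 \<and> A *v b = (b \<bullet> (A *v b)) *\<^sub>R b" using eB nv ev by auto
          show "\<forall>b\<in>insert v B. \<forall>c\<in>insert v B. b \<noteq> c \<longrightarrow> b \<bullet> c = 0"
            using oB vW unfolding W_def by (auto simp: inner_commute)
        qed
      qed
    qed
  qed
  then show ?thesis by blast
qed



definition outer :: "real^'n \<Rightarrow> real^'n^'n" where "outer v = (\<chi> i j. v$i * v$j)"
definition spec :: "('n \<Rightarrow> real^'n) \<Rightarrow> ('n \<Rightarrow> real) \<Rightarrow> real^'n^'n" where
  "spec g f = (\<Sum>i\<in>UNIV. f i *\<^sub>R outer (g i))"
definition ONF :: "('n \<Rightarrow> real^'n) \<Rightarrow> bool" where
  "ONF g \<longleftrightarrow> (\<forall>i j. g i \<bullet> g j = (if i = j then 1 else 0))"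

lemma outer_mv: "outer v *v x = (v \<bullet> x) *\<^sub>R v"
proof -
  have "(outer v *v x) $ r = v$r * (v \<bullet> x)" for r
  proof -
    have "(outer v *v x) $ r = (\<Sum>j\<in>UNIV. v$r * (v$j * x$j))"
      unfolding outer_def matrix_vector_mult_def by (simp add: mult.assoc)
    also have "\<dots> = v$r * (v \<bullet> x)" unfolding inner_vec_def by (simp add: sum_distrib_left)
    finally show ?thesis .
  qed
  then show ?thesis unfolding vec_eq_iff by (simp add: mult.commute)
qed

lemma mv_sum: "(\<Sum>i\<in>S. M i) *v x = (\<Sum>i\<in>S. M i *v x)"
proof (induction S rule: infinite_finite_induct)
  case (infinite S) then show ?case by simp
next
  case empty then show ?case by (simp add: vec_eq_iff matrix_vector_mult_def)
next
  case (insert a S) then show ?case by (simp add: matrix_vector_mult_add_rdistrib)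
qed

lemma mv_sum_right: "A *v (\<Sum>i\<in>S. x i) = (\<Sum>i\<in>S. A *v x i)"
proof (induction S rule: infinite_finite_induct)
  case (infinite S) then show ?case by simp
next
  case empty then show ?case by (simp add: vec_eq_iff matrix_vector_mult_def)
next
  case (insert a S) then show ?case by (simp add: matrix_vector_right_distrib)
qed

lemma spec_mv: "spec g f *v x = (\<Sum>i\<in>UNIV. (f i * (g i \<bullet> x)) *\<^sub>R g i)"
  unfolding spec_def mv_sum by (simp add: scaleR_matrix_vector_assoc[symmetric] outer_mv)

lemma ONF_coeff: "ONF g \<Longrightarrow> g j \<bullet> (\<Sum>i\<in>UNIV. c i *\<^sub>R g i) = c j"
proof -
  assume "ONF g"
  hence "g j \<bullet> (\<Sum>i\<in>UNIV. c i *\<^sub>R g i) = (\<Sum>i\<in>UNIV. c i * (if j = i then 1 else 0))"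
    by (simp add: ONF_def inner_sum_right)
  also have "\<dots> = (\<Sum>i\<in>UNIV. if j = i then c i else 0)" by (rule sum.cong) auto
  finally show ?thesis by simp
qed

lemma ONF_parseval: "ONF g \<Longrightarrow> (\<Sum>i\<in>UNIV. c i *\<^sub>R g i) \<bullet> (\<Sum>i\<in>UNIV. c i *\<^sub>R g i) = (\<Sum>i\<in>UNIV. (c i)^2)"
  by (simp add: inner_sum_left ONF_coeff power2_eq_square)

lemma ONF_expand:
  fixes g :: "'n \<Rightarrow> real^'n"
  assumes "ONF g"
  shows "x = (\<Sum>i\<in>UNIV. (g i \<bullet> x) *\<^sub>R g i)"
proof -
  define V :: "real^'n^'n" where "V = (\<chi> r c. g c $ r)"
  have ent: "(transpose V ** V) $ i $ j = g i \<bullet> g j" for i j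
    by (simp add: matrix_matrix_mult_def transpose_def V_def inner_vec_def)
  have "transpose V ** V = mat 1"
    using assms unfolding vec_eq_iff by (simp add: ent mat_def ONF_def)
  hence VV: "V ** transpose V = mat 1" by (rule matrix_left_right_inverse1)
  have "x = (V ** transpose V) *v x" by (simp add: VV)
  also have "\<dots> = V *v (transpose V *v x)" by (rule matrix_vector_mul_assoc[symmetric])
  also have "\<dots> = (\<Sum>i\<in>UNIV. (g i \<bullet> x) *\<^sub>R g i)"
  proof -
    have tv: "(transpose V *v x) $ c = g c \<bullet> x" for c
      unfolding matrix_vector_mult_def transpose_def V_def inner_vec_def by simp
    have vy: "(V *v y) $ r = (\<Sum>c\<in>UNIV. g c $ r * y $ c)" for y r
      unfolding matrix_vector_mult_def V_def by simp
    show ?thesis unfolding vec_eq_iff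
      apply (simp only: vy tv sum_component vector_scaleR_component)
      apply (intro allI sum.cong refl)
      apply (simp add: mult.commute)
      done
  qed
  finally show ?thesis .
qed

lemma ONF_norm2: "ONF g \<Longrightarrow> (norm x)^2 = (\<Sum>i\<in>UNIV. (g i \<bullet> x)^2)"
proof -
  assume on: "ONF g"
  have e: "(\<Sum>i\<in>UNIV. (g i \<bullet> x) *\<^sub>R g i) = x" by (rule ONF_expand[OF on, symmetric])
  have "(norm x)^2 = x \<bullet> x" by (simp add: dot_square_norm)
  also have "\<dots> = (\<Sum>i\<in>UNIV. (g i \<bullet> x) *\<^sub>R g i) \<bullet> (\<Sum>i\<in>UNIV. (g i \<bullet> x) *\<^sub>R g i)"
    by (simp only: e)
  also have "\<dots> = (\<Sum>i\<in>UNIV. (g i \<bullet> x)^2)" by (rule ONF_parseval[OF on])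
  finally show ?thesis .
qed

lemma spec_norm_bound:
  assumes "ONF g" and "\<And>i. \<bar>f i\<bar> \<le> m"
  shows "norm (spec g f *v x) \<le> m * norm x"
proof -
  have m0: "0 \<le> m" using assms(2) by (meson abs_ge_zero order_trans)
  have "(norm (spec g f *v x))^2 = (\<Sum>i\<in>UNIV. (f i * (g i \<bullet> x))^2)"
    unfolding spec_mv dot_square_norm[symmetric] by (rule ONF_parseval[OF assms(1)])
  also have "\<dots> \<le> (\<Sum>i\<in>UNIV. m^2 * (g i \<bullet> x)^2)"
  proof (rule sum_mono)
    fix i
    have "\<bar>f i\<bar>^2 \<le> m^2" using assms(2)[of i] by (intro power_mono) auto
    hence "(f i)^2 \<le> m^2" by simp
    hence "(f i)^2 * (g i \<bullet> x)^2 \<le> m^2 * (g i \<bullet> x)^2"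
      by (rule mult_right_mono) simp
    then show "(f i * (g i \<bullet> x))^2 \<le> m^2 * (g i \<bullet> x)^2"
      by (simp only: power_mult_distrib)
  qed
  also have "\<dots> = (m * norm x)^2" by (simp add: ONF_norm2[OF assms(1), of x] sum_distrib_left power_mult_distrib)
  finally have "(norm (spec g f *v x))^2 \<le> (m * norm x)^2" .
  then show ?thesis by (rule power2_le_imp_le) (simp add: m0)
qed

lemma spec_eig: "ONF g \<Longrightarrow> spec g d *v g j = d j *\<^sub>R g j"
proof -
  assume on: "ONF g"
  have "spec g d *v g j = (\<Sum>i\<in>UNIV. (d i * (g i \<bullet> g j)) *\<^sub>R g i)" by (simp add: spec_mv)
  also have "\<dots> = (\<Sum>i\<in>UNIV. if i = j then d i *\<^sub>R g i else 0)"
    by (rule sum.cong) (use on in \<open>auto simp: ONF_def\<close>)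
  finally show ?thesis by simp
qed

lemma mpow_spec:
  assumes "ONF g"
  shows "mpow (spec g d) k = spec g (\<lambda>i. d i ^ k)"
proof (induction k)
  case 0
  show ?case unfolding matrix_eq
    by (simp add: spec_mv ONF_expand[OF assms, symmetric])
next
  case (Suc k)
  show ?case unfolding matrix_eq
  proof
    fix x
    have "mpow (spec g d) (Suc k) *v x = spec g d *v (spec g (\<lambda>i. d i ^ k) *v x)"
      by (simp add: Suc matrix_vector_mul_assoc)
    also have "\<dots> = spec g (\<lambda>i. d i ^ Suc k) *v x"
      unfolding spec_mv[of g "\<lambda>i. d i ^ k"] by (simp add: spec_mv ONF_coeff[OF assms] mult.assoc)
    finally show "mpow (spec g d) (Suc k) *v x = spec g (\<lambda>i. d i ^ Suc k) *v x" .
  qed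
qed

lemma spec_diff: "spec g f - spec g f' = spec g (\<lambda>i. f i - f' i)"
  by (simp add: spec_def sum_subtractf scaleR_diff_left)

lemma spec_filter:
  assumes "ONF g" and "\<forall>l. summable (\<lambda>k. h k * l ^ k)"
  shows "summable (\<lambda>k. h k *\<^sub>R mpow (spec g d) k)"
    and "graph_filter h (spec g d) = spec g (\<lambda>i. freq_resp h (d i))"
proof -
  have eq: "h k *\<^sub>R mpow (spec g d) k = (\<Sum>i\<in>UNIV. (h k * d i ^ k) *\<^sub>R outer (g i))" for k
    unfolding mpow_spec[OF assms(1)] unfolding spec_def by (simp add: scaleR_sum_right)
  have sm: "summable (\<lambda>k. (h k * d i ^ k) *\<^sub>R outer (g i))" for i
    using assms(2) by (intro summable_scaleR_left) auto
  show "summable (\<lambda>k. h k *\<^sub>R mpow (spec g d) k)"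
    unfolding eq by (intro summable_sum sm)
  have "graph_filter h (spec g d) = (\<Sum>k. \<Sum>i\<in>UNIV. (h k * d i ^ k) *\<^sub>R outer (g i))"
    unfolding graph_filter_def eq ..
  also have "\<dots> = (\<Sum>i\<in>UNIV. \<Sum>k. (h k * d i ^ k) *\<^sub>R outer (g i))"
    by (rule suminf_sum) (rule sm)
  also have "\<dots> = spec g (\<lambda>i. freq_resp h (d i))"
    unfolding spec_def freq_resp_def using assms(2)
    by (intro sum.cong refl) (simp add: suminf_scaleR_left)
  finally show "graph_filter h (spec g d) = spec g (\<lambda>i. freq_resp h (d i))" .
qed

lemma spectral:
  fixes A :: "real^'n^'n"
  assumes "symmetric_mat A"
  shows "\<exists>g d. ONF g \<and> A = spec g d"
proof -
  obtain B where fB: "finite B" and cB: "card B = CARD('n)"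
    and eB: "\<forall>b\<in>B. norm b = 1 \<and> A *v b = (b \<bullet> (A *v b)) *\<^sub>R b"
    and oB: "\<forall>b\<in>B. \<forall>c\<in>B. b \<noteq> c \<longrightarrow> b \<bullet> c = 0"
    using spectral_set[OF assms] by blast
  obtain g where bij: "bij_betw g (UNIV :: 'n set) B"
    using finite_same_card_bij[of "UNIV :: 'n set" B] fB cB by auto
  have gB: "g i \<in> B" for i using bij by (auto simp: bij_betw_def)
  have ginj: "g i = g j \<Longrightarrow> i = j" for i j using bij by (auto simp: bij_betw_def inj_on_def)
  have on: "ONF g" unfolding ONF_def
  proof (intro allI)
    fix i j
    show "g i \<bullet> g j = (if i = j then 1 else 0)"
    proof (cases "i = j")
      case True then show ?thesis using eB gB[of i] by (simp add: dot_square_norm)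
    next
      case False then show ?thesis using oB gB ginj by metis
    qed
  qed
  define d where "d i = g i \<bullet> (A *v g i)" for i
  have "A = spec g d" unfolding matrix_eq
  proof
    fix x
    have "A *v x = A *v (\<Sum>i\<in>UNIV. (g i \<bullet> x) *\<^sub>R g i)" using ONF_expand[OF on, of x] by simp
    also have "\<dots> = (\<Sum>i\<in>UNIV. (g i \<bullet> x) *\<^sub>R (A *v g i))"
      by (simp add: mv_sum_right matrix_vector_mult_scaleR)
    also have "\<dots> = spec g d *v x"
    proof -
      have "A *v g i = d i *\<^sub>R g i" for i using eB gB unfolding d_def by blast
      then show ?thesis unfolding spec_mv by (simp add: mult.commute)
    qed
    finally show "A *v x = spec g d *v x" .
  qed
  then show ?thesis using on by blast
qed



lemma mv_blin: "bounded_linear (\<lambda>M::real^'n^'m. M *v x)"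
proof -
  have "linear (\<lambda>M::real^'n^'m. M *v x)"
    by (rule linearI) (simp_all add: matrix_vector_mult_add_rdistrib scaleR_matrix_vector_assoc)
  then show ?thesis by (simp add: linear_conv_bounded_linear)
qed

lemma gf_mv:
  assumes "summable (\<lambda>k. h k *\<^sub>R mpow A k)"
  shows "graph_filter h A *v x = (\<Sum>k. h k *\<^sub>R (mpow A k *v x))"
  unfolding graph_filter_def
  using bounded_linear.suminf[OF mv_blin assms, of x]
  by (simp add: scaleR_matrix_vector_assoc)

lemma mpow_bound:
  assumes "\<And>z. norm (B *v z) \<le> R * norm z" "R \<ge> 0"
  shows "norm (mpow B k *v y) \<le> R^k * norm y"
proof (induction k)
  case 0 then show ?case by simp
next
  case (Suc k)
  have "norm (mpow B (Suc k) *v y) = norm (B *v (mpow B k *v y))" by (simp add: matrix_vector_mul_assoc)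
  also have "\<dots> \<le> R * norm (mpow B k *v y)" by (rule assms(1))
  also have "\<dots> \<le> R * (R^k * norm y)" using Suc assms(2) by (rule mult_left_mono)
  finally show ?case by (simp add: mult.assoc)
qed

lemma mpow_lip:
  assumes A: "\<And>z. norm (A *v z) \<le> R * norm z" and B: "\<And>z. norm (B *v z) \<le> R * norm z"
    and AB: "\<And>z. norm ((A - B) *v z) \<le> dl * norm z" and R: "R \<ge> 0" and dl: "dl \<ge> 0"
  shows "norm (mpow A k *v y - mpow B k *v y) \<le> real k * R^(k - 1) * dl * norm y"
proof (induction k)
  case 0 then show ?case by simp
next
  case (Suc k)
  have eq: "mpow A (Suc k) *v y - mpow B (Suc k) *v y =
      A *v (mpow A k *v y - mpow B k *v y) + (A - B) *v (mpow B k *v y)"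
    by (simp add: matrix_vector_mul_assoc[symmetric] matrix_vector_right_distrib
        matrix_vector_mult_diff_distrib matrix_vector_mult_diff_rdistrib)
  have "norm (mpow A (Suc k) *v y - mpow B (Suc k) *v y) \<le>
      norm (A *v (mpow A k *v y - mpow B k *v y)) + norm ((A - B) *v (mpow B k *v y))"
    unfolding eq by (rule norm_triangle_ineq)
  also have "\<dots> \<le> R * (real k * R^(k - 1) * dl * norm y) + dl * (R^k * norm y)"
  proof (rule add_mono)
    show "norm (A *v (mpow A k *v y - mpow B k *v y)) \<le> R * (real k * R ^ (k - 1) * dl * norm y)"
      using A[of "mpow A k *v y - mpow B k *v y"] Suc R by (meson mult_left_mono order_trans)
    show "norm ((A - B) *v (mpow B k *v y)) \<le> dl * (R ^ k * norm y)"
      using AB[of "mpow B k *v y"] mpow_bound[OF B R, of k y] dl by (meson mult_left_mono order_trans)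
  qed
  also have "\<dots> = real (Suc k) * R^(Suc k - 1) * dl * norm y"
  proof (cases k)
    case 0 then show ?thesis by simp
  next
    case (Suc j) then show ?thesis by (simp add: algebra_simps)
  qed
  finally show ?case .
qed

lemma lip_summable:
  assumes "\<forall>l. summable (\<lambda>k. h k * l ^ k)" and R: "R \<ge> 0"
  shows "summable (\<lambda>k. \<bar>h k\<bar> * (real k * R^(k - 1)))"
proof -
  have "summable (\<lambda>n. diffs h n * (R + 1) ^ n)"
    by (rule termdiff_converges_all) (use assms(1) in auto)
  hence "summable (\<lambda>n. norm (diffs h n * R ^ n))"
    by (rule powser_insidea) (use R in auto)
  hence "summable (\<lambda>n. \<bar>h (Suc n)\<bar> * (real (Suc n) * R^(Suc n - 1)))"
    using R by (simp add: diffs_def abs_mult mult_ac del: of_nat_Suc)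
  then show ?thesis by (subst summable_Suc_iff[symmetric])
qed

lemma gf_lip:
  assumes hs: "\<forall>l. summable (\<lambda>k. h k * l ^ k)"
    and sA: "summable (\<lambda>k. h k *\<^sub>R mpow A k)" and sB: "summable (\<lambda>k. h k *\<^sub>R mpow B k)"
    and A: "\<And>z. norm (A *v z) \<le> R * norm z" and B: "\<And>z. norm (B *v z) \<le> R * norm z"
    and AB: "\<And>z. norm ((A - B) *v z) \<le> dl * norm z" and R: "R \<ge> 0" and dl: "dl \<ge> 0"
  shows "norm (graph_filter h A *v x - graph_filter h B *v x) \<le>
     (\<Sum>k. \<bar>h k\<bar> * (real k * R^(k - 1))) * dl * norm x"
proof -
  have s1: "summable (\<lambda>k. h k *\<^sub>R (mpow A k *v x))"
    using bounded_linear.summable[OF mv_blin sA, of x] by (simp add: scaleR_matrix_vector_assoc)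
  have s2: "summable (\<lambda>k. h k *\<^sub>R (mpow B k *v x))"
    using bounded_linear.summable[OF mv_blin sB, of x] by (simp add: scaleR_matrix_vector_assoc)
  have sL: "summable (\<lambda>k. \<bar>h k\<bar> * (real k * R^(k - 1)))" by (rule lip_summable[OF hs R])
  have "graph_filter h A *v x - graph_filter h B *v x = (\<Sum>k. h k *\<^sub>R (mpow A k *v x) - h k *\<^sub>R (mpow B k *v x))"
    unfolding gf_mv[OF sA] gf_mv[OF sB] by (rule suminf_diff[OF s1 s2])
  also have "norm \<dots> \<le> (\<Sum>k. \<bar>h k\<bar> * (real k * R^(k - 1)) * (dl * norm x))"
  proof (rule norm_suminf_le)
    fix k
    have "norm (h k *\<^sub>R (mpow A k *v x) - h k *\<^sub>R (mpow B k *v x)) = \<bar>h k\<bar> * norm (mpow A k *v x - mpow B k *v x)"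
      by (simp add: scaleR_diff_right[symmetric])
    also have "\<dots> \<le> \<bar>h k\<bar> * (real k * R^(k - 1) * dl * norm x)"
      by (rule mult_left_mono[OF mpow_lip[OF A B AB R dl]]) simp
    finally show "norm (h k *\<^sub>R (mpow A k *v x) - h k *\<^sub>R (mpow B k *v x)) \<le> \<bar>h k\<bar> * (real k * R^(k - 1)) * (dl * norm x)"
      by (simp add: mult_ac)
    show "summable (\<lambda>k. \<bar>h k\<bar> * (real k * R^(k - 1)) * (dl * norm x))"
      by (rule summable_mult2[OF sL])
  qed
  also have "\<dots> = (\<Sum>k. \<bar>h k\<bar> * (real k * R^(k - 1))) * (dl * norm x)"
    by (rule suminf_mult2[OF sL, symmetric])
  finally show ?thesis by (simp add: mult.assoc)
qed

lemma sym_summable: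
  assumes "symmetric_mat A" "\<forall>l. summable (\<lambda>k. h k * l ^ k)"
  shows "summable (\<lambda>k. h k *\<^sub>R mpow A k)"
  using spectral[OF assms(1)] spec_filter(1)[OF _ assms(2)] by blast

lemma gf_bound1:
  assumes "symmetric_mat A" "\<forall>l. summable (\<lambda>k. h k * l ^ k)" "\<forall>l. \<bar>freq_resp h l\<bar> \<le> 1"
  shows "norm (graph_filter h A *v x) \<le> norm x"
proof -
  obtain g d where on: "ONF g" and Ad: "A = spec g d" using spectral[OF assms(1)] by blast
  have "graph_filter h A = spec g (\<lambda>i. freq_resp h (d i))" unfolding Ad by (rule spec_filter(2)[OF on assms(2)])
  then show ?thesis using spec_norm_bound[OF on, of "\<lambda>i. freq_resp h (d i)" 1 x] assms(3) by simp
qed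

lemma spec_scale: "c *\<^sub>R spec g f = spec g (\<lambda>i. c * f i)"
  by (simp add: spec_def scaleR_sum_right)

lemma perm_orth:
  assumes "p permutes (UNIV :: 'n set)"
  shows "transpose (perm_mat p) ** (perm_mat p :: real^'n^'n) = mat 1"
proof -
  have "(transpose (perm_mat p) ** (perm_mat p :: real^'n^'n)) $ i $ j = (if i = j then 1 else 0)" for i j
  proof -
    have "(transpose (perm_mat p) ** (perm_mat p :: real^'n^'n)) $ i $ j =
        (\<Sum>k\<in>UNIV. if k = p i then (if p j = p i then 1 else 0) else 0)"
      unfolding matrix_matrix_mult_def transpose_def perm_mat_def
      by (simp only: vec_lambda_beta) (intro sum.cong refl; auto)
    also have "\<dots> = (if p j = p i then 1 else 0)" by simp
    also have "\<dots> = (if i = j then 1 else 0)" using permutes_inj[OF assms] by (auto simp: inj_def)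
    finally show ?thesis .
  qed
  then show ?thesis by (simp add: vec_eq_iff mat_def)
qed

lemma perm_transpose:
  assumes "p permutes (UNIV :: 'n set)"
  shows "transpose (perm_mat p) = (perm_mat (inv p) :: real^'n^'n)"
  unfolding vec_eq_iff transpose_def perm_mat_def using permutes_inv_eq[OF assms] by auto

lemma orth_inner:
  fixes P :: "real^'n^'m"
  assumes "transpose P ** P = mat 1"
  shows "(P *v u) \<bullet> (P *v v) = u \<bullet> v"
proof -
  have "(P *v u) \<bullet> (P *v v) = (u v* transpose P) \<bullet> (P *v v)" by (simp only: vector_transpose_matrix)
  also have "\<dots> = u \<bullet> (transpose P *v (P *v v))" by (rule dot_lmul_matrix)
  also have "\<dots> = u \<bullet> v" by (simp only: matrix_vector_mul_assoc assms matrix_vector_mul_lid)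
  finally show ?thesis .
qed

lemma orth_norm:
  fixes P :: "real^'n^'m"
  assumes "transpose P ** P = mat 1"
  shows "norm (P *v u) = norm u"
  using orth_inner[OF assms, of u u] by (simp add: norm_eq_sqrt_inner)

lemma spec_conj:
  assumes "transpose P ** P = mat 1" "ONF g"
  shows "ONF (\<lambda>i. P *v g i)" and "P ** spec g d ** transpose P = spec (\<lambda>i. P *v g i) d"
proof -
  show "ONF (\<lambda>i. P *v g i)" using assms by (simp add: ONF_def orth_inner)
  show "P ** spec g d ** transpose P = spec (\<lambda>i. P *v g i) d"
    unfolding matrix_eq
  proof
    fix x
    have "(P ** spec g d ** transpose P) *v x = P *v (spec g d *v (transpose P *v x))"
      by (simp only: matrix_vector_mul_assoc matrix_mul_assoc)
    also have "\<dots> = (\<Sum>i\<in>UNIV. (d i * (g i \<bullet> (transpose P *v x))) *\<^sub>R (P *v g i))"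
      by (simp add: spec_mv mv_sum_right matrix_vector_mult_scaleR)
    also have "\<dots> = spec (\<lambda>i. P *v g i) d *v x"
    proof -
      have "g i \<bullet> (transpose P *v x) = (P *v g i) \<bullet> x" for i
        by (metis dot_lmul_matrix vector_transpose_matrix)
      then show ?thesis by (simp add: spec_mv)
    qed
    finally show "(P ** spec g d ** transpose P) *v x = spec (\<lambda>i. P *v g i) d *v x" .
  qed
qed



lemma ilip_scale:
  fixes f :: "real \<Rightarrow> real"
  assumes IL: "\<forall>l1 l2. \<bar>f l2 - f l1\<bar> * (\<bar>l1 + l2\<bar> / 2) \<le> C * \<bar>l2 - l1\<bar>"
    and C: "C > 0" and s: "s = 1 \<or> s = -1" and e: "0 \<le> e" "e \<le> \<epsilon>" "\<epsilon> \<le> 1/4"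
  shows "\<bar>f d - f ((1 + 2 * s * e) * d)\<bar> \<le> 2 * C * \<epsilon> + 4 * C * \<epsilon>^2"
proof -
  define c where "c = 1 + 2 * s * e"
  define D where "D = \<bar>f d - f (c * d)\<bar>"
  have D0: "D \<ge> 0" by (simp add: D_def)
  have rhs0: "0 \<le> 2 * C * \<epsilon> + 4 * C * \<epsilon>^2" using C e by simp
  have c1: "1 + c > 0" using s e by (auto simp: c_def)
  have key: "D * (1 + s * e) \<le> 2 * C * e"
  proof (cases "d = 0")
    case True then show ?thesis using C e by (simp add: D_def)
  next
    case False
    have "\<bar>f (c * d) - f d\<bar> * (\<bar>d + c * d\<bar> / 2) \<le> C * \<bar>c * d - d\<bar>" using IL by blast
    moreover have "\<bar>d + c * d\<bar> = \<bar>d\<bar> * (1 + c)"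
    proof -
      have "d + c * d = d * (1 + c)" by (simp add: algebra_simps)
      then show ?thesis using c1 by (simp add: abs_mult)
    qed
    moreover have "\<bar>c * d - d\<bar> = \<bar>d\<bar> * (2 * e)" using s e
      by (auto simp: c_def algebra_simps abs_mult)
    ultimately have "D * (\<bar>d\<bar> * (1 + c) / 2) \<le> C * (\<bar>d\<bar> * (2 * e))"
      by (simp add: D_def abs_minus_commute)
    hence "\<bar>d\<bar> * (D * ((1 + c) / 2)) \<le> \<bar>d\<bar> * (2 * C * e)" by (simp add: algebra_simps)
    hence "D * ((1 + c) / 2) \<le> 2 * C * e" using False by (simp add: mult_le_cancel_left)
    moreover have "(1 + c) / 2 = 1 + s * e" by (simp add: c_def)
    ultimately show ?thesis by simp
  qed
  have m: "(1 + s * e) * (1 + 2 * e) \<ge> 1"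
  proof (cases "s = 1")
    case True then show ?thesis using e by (simp add: algebra_simps)
  next
    case False
    hence "s = -1" using s by simp
    moreover have "e * (1 - 2 * e) \<ge> 0" using e by simp
    ultimately show ?thesis by (simp add: algebra_simps)
  qed
  have "D \<le> D * ((1 + s * e) * (1 + 2 * e))" using D0 m by (metis mult_left_mono mult.right_neutral)
  also have "\<dots> = (D * (1 + s * e)) * (1 + 2 * e)" by (simp add: mult.assoc)
  also have "\<dots> \<le> (2 * C * e) * (1 + 2 * e)" using key e by (intro mult_right_mono) auto
  also have "\<dots> \<le> (2 * C * \<epsilon>) * (1 + 2 * \<epsilon>)" using C e by (intro mult_mono) auto
  also have "\<dots> = 2 * C * \<epsilon> + 4 * C * \<epsilon>^2" by (simp add: algebra_simps power2_eq_square)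
  finally show ?thesis by (simp add: D_def c_def)
qed


lemma transpose_add: "transpose (X + Y) = transpose X + transpose (Y :: real^'n^'n)"
  by (simp add: vec_eq_iff transpose_def)

lemma vec2: "(w::real^'n) * 2 = 2 *\<^sub>R w"
  by (simp add: vec_eq_iff)

lemma snorm_pt: "norm (M *v z) \<le> snorm M * norm z"
  unfolding snorm_def by (rule onorm[OF matrix_vector_mul_bounded_linear])

lemma snorm_ge0: "snorm M \<ge> 0"
  unfolding snorm_def by (rule onorm_pos_le[OF matrix_vector_mul_bounded_linear])

lemma finite_perm_mats: "finite (perm_mats :: (real^'n^'n) set)"
  unfolding perm_mats_def by (rule finite_image_set) (simp add: finite_permutations)

theorem theorem3:
  fixes S :: "real^'n^'n" and h :: "nat \<Rightarrow> real" and C :: real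
  assumes "symmetric_mat S"
    and "\<forall>l. summable (\<lambda>k. h k * l ^ k)"
    and "\<forall>l. \<bar>freq_resp h l\<bar> \<le> 1"
    and "integral_lipschitz h C"
  shows "\<exists>K. \<forall>(S' :: real^'n^'n) E (\<epsilon> :: real).
           symmetric_mat S' \<and> symmetric_mat E \<and> E \<in> rel_pert_set S S' \<and>
           pert_dist S S' \<le> snorm E \<and> snorm E \<le> \<epsilon> \<and>
           min (snorm ((1 / snorm E) *\<^sub>R E - mat 1)) (snorm ((1 / snorm E) *\<^sub>R E + mat 1)) \<le> \<epsilon>
           \<longrightarrow> perm_op_dist (graph_filter h S) (graph_filter h S') \<le> 2 * C * \<epsilon> + K * \<epsilon>\<^sup>2"
proof -
  note symS = assms(1) and hs = assms(2) and hb = assms(3)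
  have C0: "C > 0" and IL: "\<forall>l1 l2. \<bar>freq_resp h l2 - freq_resp h l1\<bar> * (\<bar>l1 + l2\<bar> / 2) \<le> C * \<bar>l2 - l1\<bar>"
    using assms(4) unfolding integral_lipschitz_def by auto
  define \<sigma> where "\<sigma> = snorm S"
  have \<sigma>0: "\<sigma> \<ge> 0" unfolding \<sigma>_def by (rule snorm_ge0)
  have Sb: "norm (S *v z) \<le> \<sigma> * norm z" for z unfolding \<sigma>_def by (rule snorm_pt)
  define R where "R = 2 * \<sigma> + 1"
  have R0: "R \<ge> 0" using \<sigma>0 by (simp add: R_def)
  define L where "L = (\<Sum>k. \<bar>h k\<bar> * (real k * R^(k - 1)))"
  have L0: "L \<ge> 0" unfolding L_def
    by (rule suminf_nonneg[OF lip_summable[OF hs R0]]) (use R0 in simp)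
  define K where "K = 4 * C + 2 * \<sigma> * L + 32"
  show ?thesis
  proof (intro exI[of _ K] allI impI)
    fix S' E :: "real^'n^'n" and \<epsilon> :: real
    assume H: "symmetric_mat S' \<and> symmetric_mat E \<and> E \<in> rel_pert_set S S' \<and>
           pert_dist S S' \<le> snorm E \<and> snorm E \<le> \<epsilon> \<and>
           min (snorm ((1 / snorm E) *\<^sub>R E - mat 1)) (snorm ((1 / snorm E) *\<^sub>R E + mat 1)) \<le> \<epsilon>"
    define e where "e = snorm E"
    have symS': "symmetric_mat S'" and symE: "symmetric_mat E" and Erel: "E \<in> rel_pert_set S S'"
      and ee: "e \<le> \<epsilon>" and mn: "min (snorm ((1 / e) *\<^sub>R E - mat 1)) (snorm ((1 / e) *\<^sub>R E + mat 1)) \<le> \<epsilon>"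
      using H by (auto simp: e_def)
    have e0: "e \<ge> 0" unfolding e_def by (rule snorm_ge0)
    have eps0: "\<epsilon> \<ge> 0" using e0 ee by simp
    obtain P where Pm: "P \<in> perm_mats" and tPA: "transpose P ** S' ** P = S + (E ** S + S ** E)"
      using Erel unfolding rel_pert_set_def by blast
    obtain p where pp: "p permutes (UNIV :: 'n set)" and Pp: "P = perm_mat p"
      using Pm unfolding perm_mats_def by blast
    have orth: "transpose P ** P = mat 1" unfolding Pp by (rule perm_orth[OF pp])
    have orth2: "P ** transpose P = mat 1" by (rule matrix_left_right_inverse1[OF orth])
    have tPm: "transpose P \<in> perm_mats"
      unfolding perm_mats_def Pp perm_transpose[OF pp] using permutes_inv[OF pp] by blast
    define A where "A = S + (E ** S + S ** E)"
    have tS: "transpose S = S" and tE: "transpose E = E" using symS symE by (auto simp: symmetric_mat_def)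
    have symA: "symmetric_mat A"
      unfolding symmetric_mat_def A_def transpose_add matrix_transpose_mul tS tE by (simp add: add.commute)
    have S'eq: "S' = P ** A ** transpose P"
    proof -
      have "P ** A ** transpose P = P ** (transpose P ** S' ** P) ** transpose P" using tPA by (simp add: A_def)
      also have "\<dots> = (P ** transpose P) ** S' ** (P ** transpose P)" by (simp add: matrix_mul_assoc)
      also have "\<dots> = S'" by (simp add: orth2)
      finally show ?thesis by simp
    qed
    obtain g d where ong: "ONF g" and Ad: "A = spec g d" using spectral[OF symA] by blast
    have onPg: "ONF (\<lambda>i. P *v g i)" and S'd: "S' = spec (\<lambda>i. P *v g i) d"
      using spec_conj(1)[OF orth ong] spec_conj(2)[OF orth ong, of d] S'eq Ad by auto
    define hd where "hd i = freq_resp h (d i)" for i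
    have HA: "graph_filter h A = spec g hd" unfolding Ad hd_def by (rule spec_filter(2)[OF ong hs])
    have HS': "graph_filter h S' = spec (\<lambda>i. P *v g i) hd" unfolding S'd hd_def by (rule spec_filter(2)[OF onPg hs])
    have conj: "graph_filter h S' *v (P *v x) = P *v (graph_filter h A *v x)" for x
      unfolding HS' HA spec_mv orth_inner[OF orth] by (simp add: mv_sum_right matrix_vector_mult_scaleR)
    have diffeq: "norm (P *v (graph_filter h S *v x) - graph_filter h S' *v (P *v x)) =
        norm (graph_filter h S *v x - graph_filter h A *v x)" for x
      unfolding conj matrix_vector_mult_diff_distrib[symmetric] by (rule orth_norm[OF orth])
    have Kpos: "2 * C * \<epsilon> \<ge> 0" "(4 * C + 2 * \<sigma> * L) * \<epsilon>^2 \<ge> 0"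
      using C0 eps0 \<sigma>0 L0 by auto
    have main: "norm (graph_filter h S *v x - graph_filter h A *v x) \<le> (2 * C * \<epsilon> + K * \<epsilon>\<^sup>2) * norm x" for x
    proof (cases "\<epsilon> \<ge> 1/4")
      case True
      have "norm (graph_filter h S *v x - graph_filter h A *v x) \<le> norm (graph_filter h S *v x) + norm (graph_filter h A *v x)"
        by (rule norm_triangle_ineq4)
      also have "\<dots> \<le> 2 * norm x" using gf_bound1[OF symS hs hb, of x] gf_bound1[OF symA hs hb, of x] by simp
      also have "\<dots> \<le> (2 * C * \<epsilon> + K * \<epsilon>\<^sup>2) * norm x"
      proof (rule mult_right_mono)
        have "(1/4::real)^2 \<le> \<epsilon>^2" using True by (intro power_mono) auto
        moreover have "(1/4::real)^2 = 1/16" by (simp add: power2_eq_square)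
        ultimately have "32 * \<epsilon>^2 \<ge> 2" by linarith
        then show "2 \<le> 2 * C * \<epsilon> + K * \<epsilon>\<^sup>2" using Kpos unfolding K_def by (simp add: algebra_simps)
      qed simp
      finally show ?thesis .
    next
      case False
      hence eps4: "\<epsilon> < 1/4" by simp
      have epos: "e > 0"
      proof (rule ccontr)
        assume "\<not> e > 0"
        hence "e = 0" using e0 by simp
        hence z: "(1 / e) *\<^sub>R E = 0" by simp
        have "snorm (0 - mat 1 :: real^'n^'n) = 1"
        proof -
          have "(\<lambda>x. (0 - mat 1 :: real^'n^'n) *v x) = (\<lambda>x. - x)"
          proof (rule ext)
            fix x :: "real^'n"
            have "(0 - mat 1 :: real^'n^'n) *v x = 0 *v x - mat 1 *v x" by (rule matrix_vector_mult_diff_rdistrib)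
            then show "(0 - mat 1 :: real^'n^'n) *v x = - x" by simp
          qed
          then show ?thesis unfolding snorm_def using onorm_neg[of "\<lambda>x::real^'n. x"] onorm_id by simp
        qed
        moreover have "snorm (0 + mat 1 :: real^'n^'n) = 1"
        proof -
          have "(\<lambda>x. (0 + mat 1 :: real^'n^'n) *v x) = (\<lambda>x. x)" by (rule ext) simp
          then show ?thesis unfolding snorm_def using onorm_id by (metis (no_types))
        qed
        ultimately have "min (snorm ((1 / e) *\<^sub>R E - mat 1)) (snorm ((1 / e) *\<^sub>R E + mat 1)) = 1"
          unfolding z by simp
        then show False using mn eps4 by simp
      qed
      obtain s :: real where s: "s = 1 \<or> s = -1" and sn: "snorm ((1 / e) *\<^sub>R E - s *\<^sub>R mat 1) \<le> \<epsilon>"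
      proof (cases "snorm ((1 / e) *\<^sub>R E - mat 1) \<le> \<epsilon>")
        case True then show ?thesis using that[of 1] by simp
      next
        case False
        hence "snorm ((1 / e) *\<^sub>R E + mat 1) \<le> \<epsilon>" using mn by simp
        then show ?thesis using that[of "-1"] by simp
      qed
      have Fb: "norm (E *v z - (s * e) *\<^sub>R z) \<le> e * \<epsilon> * norm z" for z
      proof -
        have "E *v z - (s * e) *\<^sub>R z = e *\<^sub>R (((1 / e) *\<^sub>R E - s *\<^sub>R mat 1) *v z)"
          using epos by (simp add: matrix_vector_mult_diff_rdistrib scaleR_matrix_vector_assoc[symmetric]
              scaleR_diff_right)
        hence "norm (E *v z - (s * e) *\<^sub>R z) = e * norm (((1 / e) *\<^sub>R E - s *\<^sub>R mat 1) *v z)"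
          using e0 by simp
        also have "\<dots> \<le> e * (\<epsilon> * norm z)"
        proof (rule mult_left_mono[OF _ e0])
          have "snorm ((1 / e) *\<^sub>R E - s *\<^sub>R mat 1) * norm z \<le> \<epsilon> * norm z"
            using sn by (rule mult_right_mono) simp
          then show "norm (((1 / e) *\<^sub>R E - s *\<^sub>R mat 1) *v z) \<le> \<epsilon> * norm z"
            using snorm_pt[of "(1 / e) *\<^sub>R E - s *\<^sub>R mat 1" z] by linarith
        qed
        finally show ?thesis by (simp add: mult.assoc)
      qed
      define c where "c = 1 + 2 * s * e"
      have cb: "\<bar>c\<bar> \<le> 3/2" using s e0 ee eps4 by (auto simp: c_def)
      define B where "B = c *\<^sub>R S"
      have symB: "symmetric_mat B" using tS by (simp add: symmetric_mat_def B_def transpose_scalar)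
      have ABeq: "(A - B) *v z = (E *v (S *v z) - (s * e) *\<^sub>R (S *v z)) + S *v (E *v z - (s * e) *\<^sub>R z)" for z
        by (simp add: A_def B_def c_def matrix_vector_mult_add_rdistrib matrix_vector_mult_diff_rdistrib
            matrix_vector_mul_assoc[symmetric] matrix_vector_right_distrib matrix_vector_mult_diff_distrib
            matrix_vector_mult_scaleR scaleR_matrix_vector_assoc[symmetric] algebra_simps vec2)
      define dl where "dl = 2 * \<sigma> * \<epsilon>^2"
      have dl0: "dl \<ge> 0" using \<sigma>0 by (simp add: dl_def)
      have ee2: "e * \<epsilon> \<le> \<epsilon>^2" using ee eps0 by (simp add: power2_eq_square mult_right_mono)
      have ABb: "norm ((A - B) *v z) \<le> dl * norm z" for z
      proof -
        have "norm ((A - B) *v z) \<le> norm (E *v (S *v z) - (s * e) *\<^sub>R (S *v z)) + norm (S *v (E *v z - (s * e) *\<^sub>R z))"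
          unfolding ABeq by (rule norm_triangle_ineq)
        also have "\<dots> \<le> e * \<epsilon> * (\<sigma> * norm z) + \<sigma> * (e * \<epsilon> * norm z)"
        proof (rule add_mono)
          show "norm (E *v (S *v z) - (s * e) *\<^sub>R (S *v z)) \<le> e * \<epsilon> * (\<sigma> * norm z)"
            using Fb[of "S *v z"] Sb[of z] e0 eps0 by (meson mult_left_mono order_trans mult_nonneg_nonneg)
          show "norm (S *v (E *v z - (s * e) *\<^sub>R z)) \<le> \<sigma> * (e * \<epsilon> * norm z)"
            using Sb[of "E *v z - (s * e) *\<^sub>R z"] Fb[of z] \<sigma>0 by (meson mult_left_mono order_trans)
        qed
        also have "\<dots> = 2 * \<sigma> * (e * \<epsilon>) * norm z" by (simp add: algebra_simps)
        also have "\<dots> \<le> 2 * \<sigma> * \<epsilon>^2 * norm z"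
          using ee2 \<sigma>0 by (intro mult_right_mono mult_left_mono) auto
        finally show ?thesis by (simp add: dl_def)
      qed
      have Bb: "norm (B *v z) \<le> R * norm z" for z
      proof -
        have "norm (B *v z) = \<bar>c\<bar> * norm (S *v z)" by (simp add: B_def scaleR_matrix_vector_assoc[symmetric])
        also have "\<dots> \<le> (3/2) * (\<sigma> * norm z)" using cb Sb[of z] by (intro mult_mono) auto
        also have "\<dots> = ((3/2) * \<sigma>) * norm z" by simp
        also have "\<dots> \<le> R * norm z" using \<sigma>0 by (intro mult_right_mono) (auto simp: R_def)
        finally show ?thesis .
      qed
      have Ab: "norm (A *v z) \<le> R * norm z" for z
      proof -
        have "A *v z = B *v z + (A - B) *v z" by (simp add: matrix_vector_mult_diff_rdistrib)
        hence "norm (A *v z) \<le> norm (B *v z) + norm ((A - B) *v z)" by (metis norm_triangle_ineq)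
        also have "\<dots> \<le> (3/2) * (\<sigma> * norm z) + dl * norm z"
        proof (rule add_mono)
          have "norm (B *v z) = \<bar>c\<bar> * norm (S *v z)" by (simp add: B_def scaleR_matrix_vector_assoc[symmetric])
          also have "\<dots> \<le> (3/2) * (\<sigma> * norm z)" using cb Sb[of z] by (intro mult_mono) auto
          finally show "norm (B *v z) \<le> (3/2) * (\<sigma> * norm z)" .
        qed (rule ABb)
        also have "\<dots> \<le> R * norm z"
        proof -
          have "\<epsilon>^2 \<le> (1/4)^2" using eps4 eps0 by (intro power_mono) auto
          moreover have "(1/4::real)^2 = 1/16" by (simp add: power2_eq_square)
          ultimately have "\<epsilon>^2 \<le> 1/16" by simp
          hence "\<sigma> * \<epsilon>^2 \<le> \<sigma> * (1/16)" using \<sigma>0 by (rule mult_left_mono)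
          hence "dl \<le> \<sigma> / 8" unfolding dl_def by simp
          hence "(3/2) * \<sigma> + dl \<le> R" using \<sigma>0 unfolding R_def by simp
          hence "((3/2) * \<sigma> + dl) * norm z \<le> R * norm z" by (rule mult_right_mono) simp
          then show ?thesis by (simp add: algebra_simps)
        qed
        finally show ?thesis .
      qed
      have part2: "norm (graph_filter h A *v x - graph_filter h B *v x) \<le> L * dl * norm x"
        unfolding L_def
        by (rule gf_lip[OF hs sym_summable[OF symA hs] sym_summable[OF symB hs] Ab Bb ABb R0 dl0])
      obtain g0 d0 where on0: "ONF g0" and Sd: "S = spec g0 d0" using spectral[OF symS] by blast
      have HS: "graph_filter h S = spec g0 (\<lambda>i. freq_resp h (d0 i))" unfolding Sd by (rule spec_filter(2)[OF on0 hs])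
      have HB: "graph_filter h B = spec g0 (\<lambda>i. freq_resp h (c * d0 i))"
        unfolding B_def Sd spec_scale by (rule spec_filter(2)[OF on0 hs])
      have part1: "norm (graph_filter h S *v x - graph_filter h B *v x) \<le> (2 * C * \<epsilon> + 4 * C * \<epsilon>^2) * norm x"
      proof -
        have "graph_filter h S *v x - graph_filter h B *v x = (graph_filter h S - graph_filter h B) *v x"
          by (simp add: matrix_vector_mult_diff_rdistrib)
        also have "\<dots> = spec g0 (\<lambda>i. freq_resp h (d0 i) - freq_resp h (c * d0 i)) *v x"
          unfolding HS HB spec_diff ..
        finally have eq: "graph_filter h S *v x - graph_filter h B *v x = spec g0 (\<lambda>i. freq_resp h (d0 i) - freq_resp h (c * d0 i)) *v x" .
        show ?thesis unfolding eq
        proof (rule spec_norm_bound[OF on0])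
          fix i
          show "\<bar>freq_resp h (d0 i) - freq_resp h (c * d0 i)\<bar> \<le> 2 * C * \<epsilon> + 4 * C * \<epsilon>^2"
            unfolding c_def by (rule ilip_scale[OF IL C0 s e0 ee]) (use eps4 in simp)
        qed
      qed
      have "norm (graph_filter h S *v x - graph_filter h A *v x) \<le>
          norm (graph_filter h S *v x - graph_filter h B *v x) + norm (graph_filter h A *v x - graph_filter h B *v x)"
      proof -
        have "graph_filter h S *v x - graph_filter h A *v x =
          (graph_filter h S *v x - graph_filter h B *v x) - (graph_filter h A *v x - graph_filter h B *v x)" by simp
        then show ?thesis by (metis norm_triangle_ineq4)
      qed
      also have "\<dots> \<le> (2 * C * \<epsilon> + 4 * C * \<epsilon>^2) * norm x + L * dl * norm x"
        using part1 part2 by (rule add_mono)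
      also have "\<dots> = (2 * C * \<epsilon> + (4 * C + 2 * \<sigma> * L) * \<epsilon>^2) * norm x"
        by (simp add: dl_def algebra_simps)
      also have "\<dots> \<le> (2 * C * \<epsilon> + K * \<epsilon>\<^sup>2) * norm x"
        by (intro mult_right_mono) (auto simp: K_def algebra_simps)
      finally show ?thesis .
    qed
    have "perm_op_dist (graph_filter h S) (graph_filter h S') \<le>
        onorm (\<lambda>x. transpose (transpose P) *v (graph_filter h S *v x) - graph_filter h S' *v (transpose (transpose P) *v x))"
      unfolding perm_op_dist_def by (rule Min_le[OF finite_imageI[OF finite_perm_mats] imageI[OF tPm]])
    also have "\<dots> \<le> 2 * C * \<epsilon> + K * \<epsilon>\<^sup>2"
      unfolding transpose_transpose by (rule onorm_le) (simp add: diffeq main)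
    finally show "perm_op_dist (graph_filter h S) (graph_filter h S') \<le> 2 * C * \<epsilon> + K * \<epsilon>\<^sup>2" .
  qed
qed

end
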